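(* Let $B$ be a nonzero real vector space, $\lfloor\cdot,\cdot\rfloor$ a symmetric bilinear form on $B$, $q(b):=\tfrac12\lfloor b,b\rfloor$. Let $f\colon B\to\,]{-}\infty,\infty]$ be proper and convex, with $f\ge q$ on $B$ and ${\cal P}_q(f)\ne\emptyset$. Then ${\cal P}_q(f)$ is a $q$--positive subset of $B$.
   Context: ${\cal P}_q(f):=\{b\in B\colon f(b)=q(b)\}$. A subset $A$ is $q$--positive if $A\neq\emptyset$ and $q(b-c)\ge0$ for all $b,c\in A$. *)

theory Defs
  imports "HOL-Analysis.Analysis" "HOL-Library.Extended_Real"
begin

definition qform :: "('a::real_vector \<Rightarrow> 'a \<Rightarrow> real) \<Rightarrow> 'a \<Rightarrow> real" where
  "qform bf b = (1/2) * bf b b"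

definition proper_fun :: "('a \<Rightarrow> ereal) \<Rightarrow> bool" where
  "proper_fun f \<longleftrightarrow> (\<forall>x. f x \<noteq> -\<infinity>) \<and> (\<exists>x. f x \<noteq> \<infinity>)"

definition convex_fun :: "('a::real_vector \<Rightarrow> ereal) \<Rightarrow> bool" where
  "convex_fun f \<longleftrightarrow> (\<forall>x y t. 0 < t \<and> t < 1 \<longrightarrow>
      f ((1 - t) *\<^sub>R x + t *\<^sub>R y) \<le> ereal (1 - t) * f x + ereal t * f y)"

definition Pq :: "('a::real_vector \<Rightarrow> 'a \<Rightarrow> real) \<Rightarrow> ('a \<Rightarrow> ereal) \<Rightarrow> 'a set" where
  "Pq bf f = {b. f b = ereal (qform bf b)}"

definition q_positive :: "('a::real_vector \<Rightarrow> 'a \<Rightarrow> real) \<Rightarrow> 'a set \<Rightarrow> bool" where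
  "q_positive bf A \<longleftrightarrow> A \<noteq> {} \<and> (\<forall>b\<in>A. \<forall>c\<in>A. qform bf (b - c) \<ge> 0)"

end

theory Submission
  imports Defs
begin

theorem lemma3p17:
  fixes bf :: "'a::real_vector \<Rightarrow> 'a \<Rightarrow> real"
    and f :: "'a \<Rightarrow> ereal"
  assumes "(UNIV :: 'a set) \<noteq> {0}"
    and "bilinear bf"
    and "\<And>x y. bf x y = bf y x"
    and "proper_fun f"
    and "convex_fun f"
    and "\<And>b. f b \<ge> ereal (qform bf b)"
    and "Pq bf f \<noteq> {}"
  shows "q_positive bf (Pq bf f)"
proof -
  have "qform bf (b - c) \<ge> 0" if hb: "b \<in> Pq bf f" and hc: "c \<in> Pq bf f" for b c
  proof -
    let ?m = "(1 - 1/2) *\<^sub>R b + (1/2::real) *\<^sub>R c"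
    have fb: "f b = ereal (qform bf b)" and fc: "f c = ereal (qform bf c)"
      using hb hc by (auto simp: Pq_def)
    have "f ?m \<le> ereal (1 - 1/2) * f b + ereal (1/2) * f c"
    proof -
      have "\<forall>x y t. 0 < t \<and> t < 1 \<longrightarrow> f ((1 - t) *\<^sub>R x + t *\<^sub>R y) \<le> ereal (1 - t) * f x + ereal t * f y"
        using assms(5) unfolding convex_fun_def by blast
      hence "f ((1 - 1/2) *\<^sub>R b + (1/2::real) *\<^sub>R c) \<le> ereal (1 - 1/2) * f b + ereal (1/2) * f c"
        by (metis field_sum_of_halves less_add_same_cancel1 half_gt_zero_iff zero_less_one)
      thus ?thesis .
    qed
    also have "\<dots> = ereal ((1/2) * qform bf b + (1/2) * qform bf c)"
      by (simp add: fb fc)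
    finally have "ereal (qform bf ?m) \<le> ereal ((1/2) * qform bf b + (1/2) * qform bf c)"
      using assms(6)[of ?m] by (meson order.trans)
    hence ineq: "qform bf ?m \<le> (1/2) * qform bf b + (1/2) * qform bf c" by simp
    have e1: "bf ?m ?m = (1/4) * (bf b b + 2 * bf b c + bf c c)"
      using assms(2,3)
      by (simp add: bilinear_ladd bilinear_radd bilinear_lmul bilinear_rmul algebra_simps)
    have e2: "bf (b - c) (b - c) = bf b b - 2 * bf b c + bf c c"
      using assms(2,3)
      by (simp add: bilinear_lsub bilinear_rsub algebra_simps)
    show ?thesis using ineq e1 e2 by (simp add: qform_def)
  qed
  thus ?thesis using assms(7) by (auto simp: q_positive_def)
qed

end
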